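(* Let $\alpha$ be a composition, $w\in CRHW_n$ with $w(\alpha)=\beta\neq0$, $\tau=\tau_w$, and let $j\ge1$ belong to $\mathrm{supp}(w)$ but not be its maximum. If $j\notin\mathrm{leg}(w)$, then the greatest entry of $\tau$ in column $j$ is strictly less than the smallest entry of $\tau$ in column $j+1$.
   Context: Box-adding operators on compositions $\alpha=(\alpha_1,\dots,\alpha_k)$: $\mathfrak t_1(\alpha)=(1,\alpha_1,\dots,\alpha_k)$ (a new row on top); for $i\ge2$, $\mathfrak t_i(\alpha)$ increases the leftmost part equal to $i-1$ by $1$ (adding a box in column $i$), and is $0$ if there is no such part; $\mathfrak t_i(0)=0$. Diagrams: row $i$ has $\alpha_i$ left-justified boxes, rows numbered top to bottom. A word $w=\mathfrak t_{i_1}\cdots\mathfrak t_{i_n}$ acts by $w(\alpha)=\mathfrak t_{i_1}(\cdots\mathfrak t_{i_n}(\alpha))$. It is a reverse $k$-hookword if $i_1\le\cdots\le i_{k+1}>i_{k+2}>\cdots>i_n$ ($0\le k\le n-1$), and then $\mathrm{leg}(w)=\{i_{k+1},\dots,i_n\}$. $\mathrm{supp}(w)=\{i_1,\dots,i_n\}$; $w$ is connected if $\mathrm{supp}(w)$ is a set of consecutive integers; $CRHW_n$ is the set of connected reverse hookwords of length $n$. If $w(\alpha)=\beta\ne0$, applying $\mathfrak t_{i_n},\dots,\mathfrak t_{i_1}$ successively adds one box at each step (the box added by $\mathfrak t_{i_m}$ is in column $i_m$); $\tau_w$ is the filling of the set of added boxes in which the box added by $\mathfrak t_{i_m}$ has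 entry $m$. *)

theory Defs
  imports Main
begin

(* A composition: a finite list of positive integers (alpha_1,...,alpha_k); row i (1-indexed) has alpha_i boxes. *)
definition is_composition :: "nat list \<Rightarrow> bool" where
  "is_composition \<alpha> \<longleftrightarrow> (\<forall>a\<in>set \<alpha>. 0 < a)"

(* Box-adding operator t_i applied to a composition, returning the new composition together
   with the (row, column) position (1-indexed, rows top to bottom) of the added box;
   None represents 0.  t_i is only defined for i >= 1. *)
definition tbox :: "nat \<Rightarrow> nat list \<Rightarrow> (nat list \<times> nat \<times> nat) option" where
  "tbox i \<alpha> =
     (if i = 0 then None
      else if i = 1 then Some (1 # \<alpha>, 1, 1)
      else if (i - 1) \<in> set \<alpha> then
        (let k = (LEAST k. k < length \<alpha> \<and> \<alpha> ! k = i - 1) in Some (\<alpha>[k := i], Suc k, i))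
      else None)"

definition top :: "nat \<Rightarrow> nat list option \<Rightarrow> nat list option" where
  "top i x = Option.bind x (\<lambda>\<alpha>. map_option fst (tbox i \<alpha>))"

definition act :: "nat list \<Rightarrow> nat list \<Rightarrow> nat list option" where
  "act w \<alpha> = foldr top w (Some \<alpha>)"

(* Simultaneously computes w(alpha) and the filling tau_w of the added boxes
   (box added by t_{i_m} gets entry m); positions are in the coordinates of the current diagram,
   so when t_1 adds a new top row, previously added boxes move down one row. *)
fun fill :: "nat list \<Rightarrow> nat list \<Rightarrow> (nat list \<times> (nat \<times> nat \<Rightarrow> nat option)) option" where
  "fill [] \<alpha> = Some (\<alpha>, \<lambda>_. None)"
| "fill (i # w) \<alpha> =
     (case fill w \<alpha> of
        None \<Rightarrow> None
      | Some (\<gamma>, F) \<Rightarrow>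
          (case tbox i \<gamma> of
             None \<Rightarrow> None
           | Some (\<delta>, r, c) \<Rightarrow>
               Some (\<delta>, \<lambda>(a, b).
                  if (a, b) = (r, c) then Some 1
                  else if i = 1 then (if a \<le> 1 then None else map_option Suc (F (a - 1, b)))
                  else map_option Suc (F (a, b)))))"

(* tau_w (only meaningful when w(alpha) \<noteq> 0) *)
definition tau :: "nat list \<Rightarrow> nat list \<Rightarrow> (nat \<times> nat \<Rightarrow> nat option)" where
  "tau w \<alpha> = (case fill w \<alpha> of None \<Rightarrow> (\<lambda>_. None) | Some (_, F) \<Rightarrow> F)"

definition col_entries :: "(nat \<times> nat \<Rightarrow> nat option) \<Rightarrow> nat \<Rightarrow> nat set" where
  "col_entries F j = {e. \<exists>r. F (r, j) = Some e}"

definition supp :: "nat list \<Rightarrow> nat set" where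
  "supp w = set w"

(* w = t_{i_1} ... t_{i_n} is a reverse k-hookword: i_1 <= ... <= i_{k+1} > i_{k+2} > ... > i_n,
   0 <= k <= n-1 (lists are 0-indexed here) *)
definition rev_k_hookword :: "nat \<Rightarrow> nat list \<Rightarrow> bool" where
  "rev_k_hookword k w \<longleftrightarrow> 0 \<notin> set w \<and> k < length w \<and>
     sorted (take (Suc k) w) \<and> sorted_wrt (>) (drop k w)"

definition rev_hookword :: "nat list \<Rightarrow> bool" where
  "rev_hookword w \<longleftrightarrow> (\<exists>k. rev_k_hookword k w)"

(* leg(w) = {i_{k+1},...,i_n}; k is unique *)
definition leg :: "nat list \<Rightarrow> nat set" where
  "leg w = set (drop (THE k. rev_k_hookword k w) w)"

definition connected_word :: "nat list \<Rightarrow> bool" where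
  "connected_word w \<longleftrightarrow> (\<forall>a\<in>supp w. \<forall>b\<in>supp w. \<forall>c. a \<le> c \<and> c \<le> b \<longrightarrow> c \<in> supp w)"

definition CRHW :: "nat \<Rightarrow> nat list set" where
  "CRHW n = {w. length w = n \<and> rev_hookword w \<and> connected_word w}"

end

theory Submission
  imports Defs
begin

lemma tbox1: "tbox 1 g = Some (1#g, 1, 1)"
  by (simp add: tbox_def)

lemma tbox_ge2:
  assumes "tbox i g = Some (d, r, c)" "i \<noteq> 1"
  shows "\<exists>k. k < length g \<and> g!k = i-1 \<and> d = g[k:=i] \<and> r = Suc k \<and> c = i \<and> i \<ge> 2"
proof -
  have i0: "i \<noteq> 0" using assms by (auto simp: tbox_def split: if_splits)
  have m: "i - 1 \<in> set g" using assms by (auto simp: tbox_def split: if_splits)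
  define k where "k = (LEAST k. k < length g \<and> g ! k = i - 1)"
  have ex: "\<exists>k. k < length g \<and> g ! k = i - 1" using m by (auto simp: in_set_conv_nth)
  have "k < length g \<and> g ! k = i - 1" unfolding k_def using LeastI_ex[OF ex] .
  moreover have "d = g[k:=i] \<and> r = Suc k \<and> c = i"
    using assms i0 m unfolding k_def by (auto simp: tbox_def Let_def)
  ultimately show ?thesis using i0 assms(2) by auto
qed

lemma fill_act: "map_option fst (fill w a) = act w a"
proof (induction w)
  case Nil
  then show ?case by (simp add: act_def)
next
  case (Cons i w)
  have "act (i#w) a = top i (act w a)" by (simp add: act_def)
  then show ?case using Cons
    by (cases "fill w a") (auto simp: top_def simp flip: Cons.IH split: option.splits prod.splits)
qed

lemma fill_inv:
  "fill w al = Some (g, F) \<Longrightarrow>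
    (\<forall>a b e. F(a,b) = Some e \<longrightarrow> 1 \<le> a \<and> a \<le> length g \<and> b \<le> g!(a-1)) \<and>
    (\<forall>b e. (\<exists>a. F(a,b) = Some e) \<longleftrightarrow> (1 \<le> e \<and> e \<le> length w \<and> w!(e-1) = b))"
proof (induction w arbitrary: g F)
  case Nil
  then show ?case by auto
next
  case (Cons i w)
  obtain g0 F0 where f0: "fill w al = Some (g0, F0)"
    using Cons.prems by (auto split: option.splits)
  obtain d r c where tb: "tbox i g0 = Some (d, r, c)"
    using Cons.prems f0 by (auto split: option.splits)
  have IH1: "\<And>a b e. F0(a,b) = Some e \<Longrightarrow> 1 \<le> a \<and> a \<le> length g0 \<and> b \<le> g0!(a-1)"
    and IH2: "\<And>b e. (\<exists>a. F0(a,b) = Some e) \<longleftrightarrow> (1 \<le> e \<and> e \<le> length w \<and> w!(e-1) = b)"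
    using Cons.IH[OF f0] by auto
  have gd: "g = d" using Cons.prems f0 tb by auto
  show ?case
  proof (cases "i = 1")
    case True
    have tbx: "d = 1#g0" "r = 1" "c = 1" using tb True tbox1 by auto
    have FF: "F = (\<lambda>(a, b). if (a, b) = (1, 1) then Some 1
                  else if a \<le> 1 then None else map_option Suc (F0 (a - 1, b)))"
      using Cons.prems f0 tb True tbx by auto
    show ?thesis
    proof (rule conjI; intro allI impI)
      fix a b e assume h: "F(a,b) = Some e"
      show "1 \<le> a \<and> a \<le> length g \<and> b \<le> g!(a-1)"
      proof (cases "(a,b) = (1,1)")
        case True then show ?thesis using gd tbx by simp
      next
        case False
        then have "a > 1" "F0(a-1,b) \<noteq> None" using h FF by (auto split: if_splits)
        then obtain e' where "F0(a-1,b) = Some e'" by auto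
        from IH1[OF this] \<open>a > 1\<close> show ?thesis using gd tbx
          by (cases a) (auto)
      qed
    next
      fix b e
      show "(\<exists>a. F(a,b) = Some e) \<longleftrightarrow> (1 \<le> e \<and> e \<le> length (i#w) \<and> (i#w)!(e-1) = b)"
      proof
        assume "\<exists>a. F(a,b) = Some e"
        then obtain a where h: "F(a,b) = Some e" by auto
        show "1 \<le> e \<and> e \<le> length (i#w) \<and> (i#w)!(e-1) = b"
        proof (cases "(a,b) = (1,1)")
          case True then show ?thesis using h FF \<open>i = 1\<close> by simp
        next
          case False
          then obtain e' where "F0(a-1,b) = Some e'" "e = Suc e'" using h FF by (auto split: if_splits)
          then show ?thesis using IH2[of b e'] by auto
        qed
      next
        assume h: "1 \<le> e \<and> e \<le> length (i#w) \<and> (i#w)!(e-1) = b"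
        show "\<exists>a. F(a,b) = Some e"
        proof (cases "e = 1")
          case True then show ?thesis using h FF \<open>i = 1\<close> by (intro exI[of _ 1]) auto
        next
          case False
          then obtain e' where e': "e = Suc e'" "e' \<ge> 1" using h by (cases e) auto
          then have "1 \<le> e' \<and> e' \<le> length w \<and> w!(e'-1) = b" using h
            by (cases e') auto
          then obtain a where "F0(a,b) = Some e'" using IH2 by blast
          then have "F(Suc a, b) = Some e" using FF e' IH1[OF \<open>F0(a,b) = Some e'\<close>] by auto
          then show ?thesis by blast
        qed
      qed
    qed
  next
    case False
    obtain k where k: "k < length g0" "g0!k = i-1" "d = g0[k:=i]" "r = Suc k" "c = i" "i \<ge> 2"
      using tbox_ge2[OF tb False] by blast
    have FF: "F = (\<lambda>(a, b). if (a, b) = (Suc k, i) then Some 1 else map_option Suc (F0 (a, b)))"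
      using Cons.prems f0 tb False k by auto
    have none: "F0(Suc k, i) = None"
    proof (rule ccontr)
      assume "F0(Suc k, i) \<noteq> None"
      then obtain e where "F0(Suc k, i) = Some e" by auto
      from IH1[OF this] k show False by simp
    qed
    have mono: "\<And>a. a < length g0 \<Longrightarrow> g0!a \<le> d!a" using k
      by (metis le_refl nth_list_update_eq nth_list_update_neq diff_le_self)
    show ?thesis
    proof (rule conjI; intro allI impI)
      fix a b e assume h: "F(a,b) = Some e"
      show "1 \<le> a \<and> a \<le> length g \<and> b \<le> g!(a-1)"
      proof (cases "(a,b) = (Suc k,i)")
        case True then show ?thesis using gd k by simp
      next
        case False
        then obtain e' where "F0(a,b) = Some e'" using h FF by (auto split: if_splits)
        from IH1[OF this] show ?thesis using gd k mono[of "a-1"] by (metis le_trans diff_less length_list_update less_le_trans less_one not_le zero_less_diff)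
      qed
    next
      fix b e
      show "(\<exists>a. F(a,b) = Some e) \<longleftrightarrow> (1 \<le> e \<and> e \<le> length (i#w) \<and> (i#w)!(e-1) = b)"
      proof
        assume "\<exists>a. F(a,b) = Some e"
        then obtain a where h: "F(a,b) = Some e" by auto
        show "1 \<le> e \<and> e \<le> length (i#w) \<and> (i#w)!(e-1) = b"
        proof (cases "(a,b) = (Suc k,i)")
          case True then show ?thesis using h FF by simp
        next
          case False
          then obtain e' where "F0(a,b) = Some e'" "e = Suc e'" using h FF by (auto split: if_splits)
          then show ?thesis using IH2[of b e'] by auto
        qed
      next
        assume h: "1 \<le> e \<and> e \<le> length (i#w) \<and> (i#w)!(e-1) = b"
        show "\<exists>a. F(a,b) = Some e"
        proof (cases "e = 1")
          case True then show ?thesis using h FF by (intro exI[of _ "Suc k"]) auto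
        next
          case False
          then obtain e' where e': "e = Suc e'" "e' \<ge> 1" using h by (cases e) auto
          then have "1 \<le> e' \<and> e' \<le> length w \<and> w!(e'-1) = b" using h
            by (cases e') auto
          then obtain a where a: "F0(a,b) = Some e'" using IH2 by blast
          then have "(a,b) \<noteq> (Suc k, i)" using none by auto
          then have "F(a, b) = Some e" using FF e' a by auto
          then show ?thesis by blast
        qed
      qed
    qed
  qed
qed


lemma hook_unique:
  assumes "rev_k_hookword k1 w" "rev_k_hookword k2 w" shows "k1 = k2"
proof (rule ccontr)
  have aux: "False" if h1: "rev_k_hookword a w" and h2: "rev_k_hookword b w" and ab: "a < b" for a b
  proof -
    have bl: "b < length w" using h2 by (simp add: rev_k_hookword_def)
    have sw: "sorted_wrt (>) (drop a w)" using h1 by (simp add: rev_k_hookword_def)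
    have "1 < length (drop a w)" using bl ab by simp
    from sorted_wrt_nth_less[OF sw _ this, of 0]
    have "drop a w ! 0 > drop a w ! 1" by simp
    then have g: "w!a > w!(Suc a)" using bl ab by simp
    have "sorted (take (Suc b) w)" using h2 by (simp add: rev_k_hookword_def)
    then have "take (Suc b) w ! a \<le> take (Suc b) w ! (Suc a)"
      using bl ab by (intro sorted_nth_mono) auto
    then have "w!a \<le> w!(Suc a)" using bl ab by simp
    then show False using g by simp
  qed
  assume "k1 \<noteq> k2"
  then have "k1 < k2 \<or> k2 < k1" by arith
  then show False using aux assms by blast
qed

theorem mainTheorem8:
  fixes \<alpha> \<beta> w :: "nat list" and n j :: nat
  assumes "is_composition \<alpha>"
    and "w \<in> CRHW n"
    and "act w \<alpha> = Some \<beta>"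
    and "1 \<le> j" and "j \<in> supp w" and "j \<noteq> Max (supp w)"
    and "j \<notin> leg w"
  shows "Max (col_entries (tau w \<alpha>) j) < Min (col_entries (tau w \<alpha>) (Suc j))"
proof -
  obtain k where hk: "rev_k_hookword k w" using assms(2) by (auto simp: CRHW_def rev_hookword_def)
  have "(THE k. rev_k_hookword k w) = k" using hk hook_unique by blast
  then have legw: "leg w = set (drop k w)" by (simp add: leg_def)
  have kl: "k < length w" and srt: "sorted (take (Suc k) w)" using hk by (auto simp: rev_k_hookword_def)
  have conn: "connected_word w" using assms(2) by (simp add: CRHW_def)
  obtain g F where fl: "fill w \<alpha> = Some (g, F)"
    using fill_act[of w \<alpha>] assms(3) by (cases "fill w \<alpha>") auto
  have tw: "tau w \<alpha> = F" using fl by (simp add: tau_def)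
  define E where "E c = {e. 1 \<le> e \<and> e \<le> length w \<and> w!(e-1) = c}" for c
  have fi: "(\<exists>a. F(a,b) = Some e) \<longleftrightarrow> (1 \<le> e \<and> e \<le> length w \<and> w!(e-1) = b)" for b e
  proof -
    have "\<forall>b e. (\<exists>a. F(a,b) = Some e) \<longleftrightarrow> (1 \<le> e \<and> e \<le> length w \<and> w!(e-1) = b)"
      using fill_inv[OF fl] by (rule conjunct2)
    then show ?thesis by blast
  qed
  have ce: "col_entries (tau w \<alpha>) c = E c" for c
    unfolding tw col_entries_def E_def by (rule set_eqI) (simp only: mem_Collect_eq fi)
  have finE: "finite (E c)" for c
  proof (rule finite_subset[of _ "{..length w}"])
    show "E c \<subseteq> {..length w}" unfolding E_def by (intro subsetI) (simp only: mem_Collect_eq atMost_iff)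
  qed simp
  have neE: "E c \<noteq> {}" if cin: "c \<in> set w" for c
  proof -
    obtain p where "p < length w" "w!p = c" using cin by (auto simp: in_set_conv_nth)
    then have "Suc p \<in> E c" unfolding E_def by simp
    then show ?thesis by auto
  qed
  have fs: "finite (supp w)" by (simp add: supp_def)
  have "Max (supp w) \<in> supp w" using fs assms(5) by (intro Max_in) auto
  moreover have "j \<le> Max (supp w)" using fs assms(5) by simp
  ultimately have "j < Max (supp w)" using assms(6) by simp
  have cw: "\<And>a b c. a \<in> supp w \<Longrightarrow> b \<in> supp w \<Longrightarrow> a \<le> c \<Longrightarrow> c \<le> b \<Longrightarrow> c \<in> supp w"
    using conn unfolding connected_word_def by blast
  have "Suc j \<in> supp w"
    using cw[OF assms(5) \<open>Max (supp w) \<in> supp w\<close>, of "Suc j"] \<open>j < Max (supp w)\<close> by simp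
  then have sj: "Suc j \<in> set w" by (simp add: supp_def)
  have jw: "j \<in> set w" using assms(5) by (simp add: supp_def)
  define M where "M = Max (E j)"
  define N where "N = Min (E (Suc j))"
  have M: "M \<in> E j" unfolding M_def using finE neE[OF jw] by (rule Max_in)
  have N: "N \<in> E (Suc j)" unfolding N_def using finE neE[OF sj] by (rule Min_in)
  define p where "p = M - 1"
  define q where "q = N - 1"
  have p: "p < length w" "w!p = j" "M = Suc p" using M unfolding E_def p_def by auto
  have q: "q < length w" "w!q = Suc j" "N = Suc q" using N unfolding E_def q_def by auto
  have pk: "p < k"
  proof (rule ccontr)
    assume "\<not> p < k"
    then have "drop k w ! (p - k) = j" using p kl by simp
    moreover have "p - k < length (drop k w)" using p \<open>\<not> p < k\<close> by simp
    ultimately have "j \<in> set (drop k w)" by (metis nth_mem)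
    then show False using assms(7) legw by simp
  qed
  have "p < q"
  proof (rule ccontr)
    assume "\<not> p < q"
    then have "take (Suc k) w ! q \<le> take (Suc k) w ! p"
      using srt pk kl by (intro sorted_nth_mono) auto
    then have "w!q \<le> w!p" using pk \<open>\<not> p < q\<close> by simp
    then show False using p q by simp
  qed
  then show ?thesis unfolding ce M_def[symmetric] N_def[symmetric] using p q by simp
qed

end
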